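(* Let $0\le\lambda<\gamma\le\delta$ and let $\mathfrak{f}=\mathfrak{s}+\overline{\mathfrak{t}}\in\mathcal{R}_H^0(\gamma,\delta,\lambda)$ with $\mathfrak{s}(z)=z+\sum_{m\ge2}a_mz^m$, $\mathfrak{t}(z)=\sum_{m\ge2}b_mz^m$. Then for every $m\ge2$: (i) $|a_m|+|b_m|\le\frac{4(\gamma-\lambda)}{m^2[2\gamma+(\delta-\gamma)(m-1)]}$; (ii) $\big||a_m|-|b_m|\big|\le\frac{4(\gamma-\lambda)}{m^2[2\gamma+(\delta-\gamma)(m-1)]}$; (iii) $|a_m|\le\frac{4(\gamma-\lambda)}{m^2[2\gamma+(\delta-\gamma)(m-1)]}$. All these results are sharp, with equality in each for the function $\mathfrak{f}(z)=z+\sum_{m\ge2}\frac{4(\gamma-\lambda)}{m^2[2\gamma+(\delta-\gamma)(m-1)]}z^m$.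
   Context: Let $\mathcal{U}=\{z\in\mathbb{C}:|z|<1\}$. $\mathcal{H}^0$ denotes the class of complex-valued harmonic functions $\mathfrak{f}=\mathfrak{s}+\overline{\mathfrak{t}}$ on $\mathcal{U}$, where $\mathfrak{s}(z)=z+\sum_{m\ge2}a_mz^m$ and $\mathfrak{t}(z)=\sum_{m\ge2}b_mz^m$ are analytic in $\mathcal{U}$. For real $0\le\lambda<\gamma\le\delta$, $\mathcal{R}_H^0(\gamma,\delta,\lambda)$ is the class of $\mathfrak{f}=\mathfrak{s}+\overline{\mathfrak{t}}\in\mathcal{H}^0$ such that for all $z\in\mathcal{U}$, $\mathrm{Re}\left[\gamma\mathfrak{s}'(z)+\delta z\mathfrak{s}''(z)+\frac{\delta-\gamma}{2}z^2\mathfrak{s}'''(z)-\lambda\right]>\left|\gamma\mathfrak{t}'(z)+\delta z\mathfrak{t}''(z)+\frac{\delta-\gamma}{2}z^2\mathfrak{t}'''(z)\right|$. *)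

theory Defs
  imports "HOL-Complex_Analysis.Complex_Analysis"
begin

definition tcoeff :: "(complex \<Rightarrow> complex) \<Rightarrow> nat \<Rightarrow> complex" where
  "tcoeff f m = (deriv ^^ m) f 0 / of_nat (fact m)"

definition Lop :: "real \<Rightarrow> real \<Rightarrow> (complex \<Rightarrow> complex) \<Rightarrow> complex \<Rightarrow> complex" where
  "Lop \<gamma> \<delta> f z = of_real \<gamma> * deriv f z + of_real \<delta> * z * (deriv ^^ 2) f z
      + of_real ((\<delta> - \<gamma>) / 2) * z^2 * (deriv ^^ 3) f z"

definition H0 :: "(complex \<Rightarrow> complex) \<Rightarrow> (complex \<Rightarrow> complex) \<Rightarrow> bool" where
  "H0 s t \<longleftrightarrow> s holomorphic_on ball 0 1 \<and> t holomorphic_on ball 0 1 \<and>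
      s 0 = 0 \<and> deriv s 0 = 1 \<and> t 0 = 0 \<and> deriv t 0 = 0"

text \<open>Class R_H^0(gamma, delta, lambda), with f = s + conj t represented by the pair (s,t).\<close>
definition RH0 :: "real \<Rightarrow> real \<Rightarrow> real \<Rightarrow> (complex \<Rightarrow> complex) \<Rightarrow> (complex \<Rightarrow> complex) \<Rightarrow> bool" where
  "RH0 \<gamma> \<delta> lam s t \<longleftrightarrow> H0 s t \<and>
     (\<forall>z\<in>ball 0 1. Re (Lop \<gamma> \<delta> s z - of_real lam) > norm (Lop \<gamma> \<delta> t z))"

end

theory Submission
  imports Defs
begin

lemma E_facts:
  fixes x :: real
  defines "e \<equiv> exp (2 * of_real pi * \<i> * of_real x)"
  shows "e \<noteq> 0" "norm e = 1" "cnj e = inverse e"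
proof -
  show "e \<noteq> 0" unfolding e_def by simp
  show "norm e = 1" unfolding e_def by (simp add: norm_exp_eq_Re)
  have "cnj e = exp (cnj (2 * of_real pi * \<i> * of_real x))" unfolding e_def by (simp add: exp_cnj)
  also have "\<dots> = exp (- (2 * of_real pi * \<i> * of_real x))" by simp
  also have "\<dots> = inverse e" unfolding e_def by (simp add: exp_minus)
  finally show "cnj e = inverse e" .
qed

lemma carath_r:
  fixes g :: "complex \<Rightarrow> complex"
  assumes hol: "g holomorphic_on ball 0 1" and pos: "\<And>z. z \<in> ball 0 1 \<Longrightarrow> Re (g z) > 0"
    and n: "n \<ge> 1" and r: "0 < r" "r < 1"
  shows "norm ((deriv ^^ n) g 0 / fact n) * r ^ n \<le> 2 * Re (g 0)"
proof -
  define p where "p = circlepath 0 r"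
  define e where "e = (\<lambda>x::real. exp (2 * of_real pi * \<i> * of_real x))"
  have p: "p x = of_real r * e x" for x unfolding p_def e_def circlepath by simp
  have vd: "vector_derivative p (at x within {0..1}) = 2 * pi * \<i> * r * e x" if "x \<in> {0..1}" for x
    using that unfolding p_def e_def by (simp add: vector_derivative_circlepath01)
  have sub: "cball 0 r \<subseteq> ball (0::complex) 1" using r by auto
  have cont: "continuous_on (cball 0 r) g"
    using holomorphic_on_imp_continuous_on[OF holomorphic_on_subset[OF hol sub]] .
  have holr: "g holomorphic_on ball 0 r" by (rule holomorphic_on_subset[OF hol]) (use r in auto)
  have w0: "(0::complex) \<in> ball 0 r" using r by simp
  have I: "((\<lambda>x. g (p x) / e x ^ k) has_integral (of_real r ^ k * ((deriv ^^ k) g 0 / fact k))) {0..1}" for k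
  proof -
    have "((\<lambda>u. g u / (u - 0) ^ (Suc k)) has_contour_integral ((2 * pi * \<i>) / (fact k) * (deriv ^^ k) g 0)) p"
      unfolding p_def by (rule Cauchy_has_contour_integral_higher_derivative_circlepath[OF cont holr w0])
    hence "((\<lambda>x. g (p x) / (p x) ^ Suc k * vector_derivative p (at x within {0..1}))
            has_integral ((2 * pi * \<i>) / (fact k) * (deriv ^^ k) g 0)) {0..1}"
      unfolding has_contour_integral_def by simp
    hence "((\<lambda>x. (2 * pi * \<i> / of_real r ^ k) * (g (p x) / e x ^ k))
            has_integral ((2 * pi * \<i>) / (fact k) * (deriv ^^ k) g 0)) {0..1}"
    proof (rule has_integral_cong[THEN iffD1, rotated])
      fix x :: real assume x: "x \<in> {0..1}"
      have ne: "of_real r * e x \<noteq> 0" using r unfolding e_def by simp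
      have pk: "p x ^ Suc k = (of_real r ^ k * e x ^ k) * (of_real r * e x)"
        by (simp add: p power_mult_distrib mult_ac)
      have gen: "\<And>G Q a c. a \<noteq> (0::complex) \<Longrightarrow> G / (Q * a) * (c * a) = c / Q * G"
        by (simp add: field_simps)
      have "g (p x) / p x ^ Suc k * vector_derivative p (at x within {0..1}) =
         g (p x) / ((of_real r ^ k * e x ^ k) * (of_real r * e x)) * ((2 * pi * \<i>) * (of_real r * e x))"
        by (simp only: pk vd[OF x] mult.assoc)
      also have "\<dots> = (2 * pi * \<i>) / (of_real r ^ k * e x ^ k) * g (p x)" by (rule gen[OF ne])
      finally show "g (p x) / p x ^ Suc k * vector_derivative p (at x within {0..1}) =
          2 * pi * \<i> / of_real r ^ k * (g (p x) / e x ^ k)" by simp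
    qed
    hence "((\<lambda>x. (of_real r ^ k / (2 * pi * \<i>)) * ((2 * pi * \<i> / of_real r ^ k) * (g (p x) / e x ^ k)))
            has_integral ((of_real r ^ k / (2 * pi * \<i>)) * ((2 * pi * \<i>) / (fact k) * (deriv ^^ k) g 0))) {0..1}"
      by (rule has_integral_mult_right)
    moreover have e1: "(of_real r ^ k / (2 * pi * \<i>)) * ((2 * pi * \<i> / of_real r ^ k) * G) = G" for G
      using r by simp
    moreover have e2: "(of_real r ^ k / (2 * pi * \<i>)) * ((2 * pi * \<i>) / (fact k) * (deriv ^^ k) g 0) = of_real r ^ k * ((deriv ^^ k) g 0 / fact k)"
      by (simp add: field_simps)
    ultimately show ?thesis unfolding e1 e2 by blast
  qed
  have Z: "((\<lambda>x. g (p x) * e x ^ n) has_integral 0) {0..1}"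
  proof -
    have h1: "(\<lambda>u. g u * u ^ (n - 1)) holomorphic_on ball 0 1"
      by (intro holomorphic_on_mult hol holomorphic_on_power holomorphic_on_ident)
    have h2: "path_image p \<subseteq> ball 0 1" unfolding p_def using r by auto
    have "((\<lambda>u. g u * u ^ (n - 1)) has_contour_integral 0) p"
      by (rule Cauchy_theorem_disc_simple[OF h1 _ h2]) (simp_all add: p_def)
    hence "((\<lambda>x. g (p x) * (p x) ^ (n - 1) * vector_derivative p (at x within {0..1})) has_integral 0) {0..1}"
      unfolding has_contour_integral_def by simp
    hence "((\<lambda>x. (2 * pi * \<i> * of_real r ^ n) * (g (p x) * e x ^ n)) has_integral 0) {0..1}"
    proof (rule has_integral_cong[THEN iffD1, rotated])
      fix x :: real assume x: "x \<in> {0..1}"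
      have pw: "(of_real r * e x) ^ (n - 1) * (of_real r * e x) = (of_real r * e x) ^ n"
        using n by (metis power_Suc2 Suc_diff_1 less_le_trans zero_less_one)
      have "g (p x) * p x ^ (n - 1) * vector_derivative p (at x within {0..1}) =
          g (p x) * (of_real r * e x) ^ (n - 1) * (2 * pi * \<i> * r * e x)"
        by (simp only: vd[OF x] p)
      also have "\<dots> = (2 * pi * \<i>) * g (p x) * ((of_real r * e x) ^ (n - 1) * (of_real r * e x))"
        by (simp only: mult_ac)
      also have "\<dots> = (2 * pi * \<i>) * g (p x) * (of_real r * e x) ^ n" by (simp only: pw)
      also have "\<dots> = 2 * pi * \<i> * of_real r ^ n * (g (p x) * e x ^ n)"
        by (simp only: power_mult_distrib mult_ac)
      finally show "g (p x) * p x ^ (n - 1) * vector_derivative p (at x within {0..1}) =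
          2 * pi * \<i> * of_real r ^ n * (g (p x) * e x ^ n)" .
    qed
    hence "((\<lambda>x. inverse (2 * pi * \<i> * of_real r ^ n) * ((2 * pi * \<i> * of_real r ^ n) * (g (p x) * e x ^ n))) has_integral (inverse (2 * pi * \<i> * of_real r ^ n) * 0)) {0..1}"
      by (rule has_integral_mult_right)
    moreover have e3: "inverse (2 * pi * \<i> * of_real r ^ n) * ((2 * pi * \<i> * of_real r ^ n) * G) = G" for G
    proof -
      have "(2 * pi * \<i> * of_real r ^ n :: complex) \<noteq> 0" using r by simp
      then show ?thesis by (metis mult.assoc left_inverse mult_1_left)
    qed
    ultimately show ?thesis unfolding e3 by simp
  qed
  have Zc: "((\<lambda>x. cnj (g (p x)) / e x ^ n) has_integral 0) {0..1}"
  proof -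
    have "((cnj \<circ> (\<lambda>x. g (p x) * e x ^ n)) has_integral cnj 0) {0..1}"
      using Z by (simp only: has_integral_cnj)
    moreover have "(cnj \<circ> (\<lambda>x. g (p x) * e x ^ n)) = (\<lambda>x. cnj (g (p x)) / e x ^ n)"
      using E_facts(3) by (auto simp: e_def divide_inverse power_inverse)
    ultimately show ?thesis by simp
  qed
  have S: "((\<lambda>x. (g (p x) + cnj (g (p x))) / e x ^ n) has_integral (of_real r ^ n * ((deriv ^^ n) g 0 / fact n))) {0..1}"
    using has_integral_add[OF I[of n] Zc] by (simp add: add_divide_distrib)
  have I0: "((\<lambda>x. 2 * g (p x)) has_integral (2 * g 0)) {0..1}"
    using has_integral_mult_right[OF I[of 0], of 2] by simp
  have "norm (of_real r ^ n * ((deriv ^^ n) g 0 / fact n)) \<le> (2 * g 0) \<bullet> 1"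
  proof (rule has_integral_norm_bound_integral_component[OF S I0])
    fix x :: real assume x: "x \<in> {0..1}"
    have pin: "p x \<in> ball 0 1" using r E_facts(2)[of x] by (simp add: p e_def norm_mult)
    have "g (p x) + cnj (g (p x)) = of_real (2 * Re (g (p x)))" by (simp add: complex_add_cnj)
    then show "norm ((g (p x) + cnj (g (p x))) / e x ^ n) \<le> (2 * g (p x)) \<bullet> 1"
      using pos[OF pin] E_facts(2)[of x] by (simp add: e_def norm_divide norm_power)
  qed
  then have "norm (of_real r ^ n * ((deriv ^^ n) g 0 / fact n)) \<le> 2 * Re (g 0)" by simp
  moreover have "norm (of_real r ^ n * ((deriv ^^ n) g 0 / fact n)) = norm ((deriv ^^ n) g 0 / fact n) * r ^ n"
    by (simp only: norm_mult norm_power norm_of_real abs_of_pos[OF r(1)] mult.commute)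
  ultimately show ?thesis by simp
qed

lemma carath:
  fixes g :: "complex \<Rightarrow> complex"
  assumes hol: "g holomorphic_on ball 0 1" and pos: "\<And>z. z \<in> ball 0 1 \<Longrightarrow> Re (g z) > 0"
    and n: "n \<ge> 1"
  shows "norm ((deriv ^^ n) g 0 / fact n) \<le> 2 * Re (g 0)"
proof (rule ccontr)
  define c where "c = norm ((deriv ^^ n) g 0 / fact n)"
  define M where "M = 2 * Re (g 0)"
  assume "\<not> norm ((deriv ^^ n) g 0 / fact n) \<le> 2 * Re (g 0)"
  hence cM: "M < c" unfolding c_def M_def by simp
  have M0: "0 < M" unfolding M_def using pos[of 0] by simp
  define q where "q = (M / c + 1) / 2"
  have q0: "0 < q" unfolding q_def using M0 cM by (simp add: field_simps)
  have q1: "q < 1" unfolding q_def using M0 cM by (simp add: field_simps)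
  define r where "r = root n q"
  have npos: "0 < n" using n by simp
  have r0: "0 < r" unfolding r_def using q0 npos by simp
  have r1: "r < 1" unfolding r_def using q0 q1 npos by simp
  have rn: "r ^ n = q" unfolding r_def using q0 npos by (simp add: real_root_pow_pos)
  have "c * q \<le> M" using carath_r[OF hol pos n r0 r1] rn unfolding c_def M_def by simp
  moreover have "c * q = (M + c) / 2" unfolding q_def using cM M0 by (simp add: field_simps)
  ultimately show False using cM by simp
qed

lemma hd_zmult:
  fixes h :: "complex \<Rightarrow> complex"
  assumes "h holomorphic_on S" "open S" "0 \<in> S"
  shows "(deriv ^^ k) (\<lambda>w. w * h w) 0 = of_nat k * (deriv ^^ (k - 1)) h 0"
proof -
  have "(deriv ^^ k) (\<lambda>w. w * h w) 0 =
        (\<Sum>i = 0..k. of_nat (k choose i) * (deriv ^^ i) (\<lambda>w. w) 0 * (deriv ^^ (k-i)) h 0)"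
    by (rule higher_deriv_mult[OF holomorphic_on_ident assms])
  also have "\<dots> = (\<Sum>i\<in>{0..k}. if i = 1 then of_nat (k choose 1) * (deriv ^^ (k-1)) h 0 else 0)"
    by (intro sum.cong) auto
  also have "\<dots> = of_nat k * (deriv ^^ (k - 1)) h 0"
    by (cases k) auto
  finally show ?thesis .
qed

lemma hd_sq0: "(deriv ^^ i) (\<lambda>w::complex. w ^ 2) 0 = (if i = 2 then 2 else 0)"
proof -
  have "(deriv ^^ i) (\<lambda>w::complex. (w - 0) ^ 2) 0 = pochhammer (of_nat (Suc 2 - i)) i * (0 - 0) ^ (2 - i)"
    by (rule higher_deriv_power)
  moreover have "(\<lambda>w::complex. (w - 0) ^ 2) = (\<lambda>w. w ^ 2)" by simp
  ultimately have eq: "(deriv ^^ i) (\<lambda>w::complex. w ^ 2) 0 = pochhammer (of_nat (Suc 2 - i)) i * (0::complex) ^ (2 - i)"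
    by simp
  show ?thesis
  proof (cases i)
    case 0 then show ?thesis using eq by simp
  next
    case (Suc j) note j = this
    show ?thesis
    proof (cases j)
      case 0 then show ?thesis using eq j by simp
    next
      case (Suc l)
      then show ?thesis using eq j by (cases l) (simp_all add: pochhammer_Suc numeral_2_eq_2 pochhammer_0_left)
    qed
  qed
qed

lemma hd_sqmult:
  fixes h :: "complex \<Rightarrow> complex"
  assumes "h holomorphic_on S" "open S" "0 \<in> S"
  shows "(deriv ^^ k) (\<lambda>w. w ^ 2 * h w) 0 = of_nat (k * (k - 1)) * (deriv ^^ (k - 2)) h 0"
proof -
  have hp: "(\<lambda>w::complex. w ^ 2) holomorphic_on S" by (intro holomorphic_intros)
  have "(deriv ^^ k) (\<lambda>w. w ^ 2 * h w) 0 =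
        (\<Sum>i = 0..k. of_nat (k choose i) * (deriv ^^ i) (\<lambda>w. w ^ 2) 0 * (deriv ^^ (k-i)) h 0)"
    by (rule higher_deriv_mult[OF hp assms])
  also have "\<dots> = (\<Sum>i\<in>{0..k}. if i = 2 then of_nat (k choose 2) * 2 * (deriv ^^ (k-2)) h 0 else 0)"
    by (intro sum.cong) (auto simp: hd_sq0)
  also have "\<dots> = (if 2 \<le> k then of_nat (k choose 2) * 2 * (deriv ^^ (k-2)) h 0 else 0)"
    by simp
  also have "\<dots> = of_nat (k * (k - 1)) * (deriv ^^ (k - 2)) h 0"
  proof (cases "2 \<le> k")
    case True
    have "(k choose 2) * 2 = k * (k - 1)" using choose_two[of k] True
      by (simp add: div_mult_self_is_m)
    then have "of_nat (k choose 2) * 2 = (of_nat (k * (k - 1)) :: complex)"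
      by (metis of_nat_mult of_nat_numeral)
    then show ?thesis using True by simp
  next
    case False
    then have "k * (k - 1) = 0" by (cases k) auto
    then show ?thesis using False by simp
  qed
  finally show ?thesis .
qed

lemma Lop_eq:
  "Lop \<gamma> \<delta> s = (\<lambda>z. of_real \<gamma> * (deriv ^^ 1) s z + (of_real \<delta> * (z * (deriv ^^ 2) s z)
      + of_real ((\<delta> - \<gamma>) / 2) * (z ^ 2 * (deriv ^^ 3) s z)))"
  by (rule ext) (simp add: Lop_def mult_ac)

lemma Lop_holo:
  assumes "s holomorphic_on ball 0 1"
  shows "Lop \<gamma> \<delta> s holomorphic_on ball 0 1"
  unfolding Lop_eq
  by (intro holomorphic_intros holomorphic_higher_deriv assms) auto

lemma Lop_deriv:
  assumes hs: "s holomorphic_on ball 0 1"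
  shows "(deriv ^^ k) (Lop \<gamma> \<delta> s) 0 =
     of_real (\<gamma> + \<delta> * real k + (\<delta> - \<gamma>) / 2 * real (k * (k - 1))) * (deriv ^^ (Suc k)) s 0"
proof -
  have o: "open (ball (0::complex) 1)" and z: "(0::complex) \<in> ball 0 1" by auto
  have H: "(deriv ^^ j) s holomorphic_on ball 0 1" for j by (intro holomorphic_higher_deriv hs o)
  have H2: "(\<lambda>z. z * (deriv ^^ j) s z) holomorphic_on ball 0 1" for j by (intro holomorphic_intros H)
  have H3: "(\<lambda>z. z ^ 2 * (deriv ^^ j) s z) holomorphic_on ball 0 1" for j by (intro holomorphic_intros H)
  have comp: "(deriv ^^ a) ((deriv ^^ b) s) 0 = (deriv ^^ (a + b)) s 0" for a b
    by (simp add: funpow_add)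
  have "(deriv ^^ k) (Lop \<gamma> \<delta> s) 0 = of_real \<gamma> * (deriv ^^ k) ((deriv ^^ 1) s) 0
      + (of_real \<delta> * (deriv ^^ k) (\<lambda>z. z * (deriv ^^ 2) s z) 0
      + of_real ((\<delta> - \<gamma>) / 2) * (deriv ^^ k) (\<lambda>z. z ^ 2 * (deriv ^^ 3) s z) 0)"
  proof -
    have A1: "(\<lambda>z. of_real \<gamma> * (deriv ^^ 1) s z) holomorphic_on ball 0 1"
      by (intro holomorphic_on_mult holomorphic_on_const H)
    have A2: "(\<lambda>z. of_real \<delta> * (z * (deriv ^^ 2) s z)) holomorphic_on ball 0 1"
      by (intro holomorphic_on_mult holomorphic_on_const H2)
    have A3: "(\<lambda>z. of_real ((\<delta> - \<gamma>) / 2) * (z ^ 2 * (deriv ^^ 3) s z)) holomorphic_on ball 0 1"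
      by (intro holomorphic_on_mult holomorphic_on_const H3)
    have A23: "(\<lambda>z. of_real \<delta> * (z * (deriv ^^ 2) s z) + of_real ((\<delta> - \<gamma>) / 2) * (z ^ 2 * (deriv ^^ 3) s z)) holomorphic_on ball 0 1"
      by (rule holomorphic_on_add[OF A2 A3])
    show ?thesis
      unfolding Lop_eq higher_deriv_add[OF A1 A23 o z] higher_deriv_add[OF A2 A3 o z]
        higher_deriv_cmult[OF H z o] higher_deriv_cmult[OF H2 z o] higher_deriv_cmult[OF H3 z o]
      by (rule refl)
  qed
  also have "\<dots> = of_real \<gamma> * (deriv ^^ Suc k) s 0
      + (of_real \<delta> * (of_nat k * (deriv ^^ (k - 1 + 2)) s 0)
      + of_real ((\<delta> - \<gamma>) / 2) * (of_nat (k * (k - 1)) * (deriv ^^ (k - 2 + 3)) s 0))"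
    by (simp only: hd_zmult[OF H o z] hd_sqmult[OF H o z] comp) simp
  also have "\<dots> = of_real (\<gamma> + \<delta> * real k + (\<delta> - \<gamma>) / 2 * real (k * (k - 1))) * (deriv ^^ (Suc k)) s 0"
  proof (cases "k \<ge> 2")
    case True
    then have "k - 1 + 2 = Suc k" "k - 2 + 3 = Suc k" by auto
    then show ?thesis by (simp add: algebra_simps)
  next
    case False
    then consider "k = 0" | "k = 1" by linarith
    then show ?thesis by cases (simp_all add: algebra_simps)
  qed
  finally show ?thesis .
qed

lemma poly_id:
  fixes x g d :: real
  shows "(g + d * x + (d - g) / 2 * (x * (x - 1))) * (x + 1) = (x + 1) ^ 2 * (2 * g + (d - g) * (x + 1 - 1)) / 2"
  by (simp add: field_simps power2_eq_square)

lemma Lop_coeff: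
  assumes hs: "s holomorphic_on ball 0 1"
  shows "(deriv ^^ k) (Lop \<gamma> \<delta> s) 0 / fact k =
     of_real (real (Suc k) ^ 2 * (2 * \<gamma> + (\<delta> - \<gamma>) * (real (Suc k) - 1)) / 2) * tcoeff s (Suc k)"
proof -
  have r: "(\<gamma> + \<delta> * real k + (\<delta> - \<gamma>) / 2 * real (k * (k - 1))) * real (Suc k)
     = real (Suc k) ^ 2 * (2 * \<gamma> + (\<delta> - \<gamma>) * (real (Suc k) - 1)) / 2"
  proof (cases k)
    case 0 then show ?thesis by simp
  next
    case (Suc j)
    have e1: "real (k * (k - 1)) = real k * (real k - 1)" using Suc by (simp add: algebra_simps)
    have e2: "real (Suc k) = real k + 1" by simp
    show ?thesis unfolding e1 e2 by (rule poly_id)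
  qed
  have f: "(of_nat (fact (Suc k)) :: complex) = of_nat (Suc k) * fact k"
    by (simp only: of_nat_fact fact_Suc of_nat_mult of_nat_id)
  have R: "(of_real (real (Suc k) ^ 2 * (2 * \<gamma> + (\<delta> - \<gamma>) * (real (Suc k) - 1)) / 2) :: complex)
     = of_real (\<gamma> + \<delta> * real k + (\<delta> - \<gamma>) / 2 * real (k * (k - 1))) * of_nat (Suc k)"
    unfolding r[symmetric] by simp
  have gen: "\<And>a D N F::complex. N \<noteq> 0 \<Longrightarrow> F \<noteq> 0 \<Longrightarrow> a * D / F = (a * N) * (D / (N * F))"
    by (simp add: field_simps)
  show ?thesis
    unfolding Lop_deriv[OF hs] tcoeff_def f R
    by (rule gen) (simp only: of_nat_eq_0_iff nat.distinct(1) not_False_eq_True, simp)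
qed

lemma choose_eps:
  fixes a b :: complex
  assumes H: "\<And>\<epsilon>. norm \<epsilon> \<le> 1 \<Longrightarrow> norm (a + \<epsilon> * b) \<le> C"
  shows "norm a + norm b \<le> C"
proof (cases "a = 0")
  case True then show ?thesis using H[of 1] by simp
next
  case False
  define \<epsilon> where "\<epsilon> = sgn a * cnj (sgn b)"
  have n: "norm \<epsilon> \<le> 1" unfolding \<epsilon>_def by (simp add: norm_mult norm_sgn)
  have cb: "cnj (sgn b) * b = of_real (norm b)"
  proof (cases "b = 0")
    case True then show ?thesis by simp
  next
    case False
    have "cnj (sgn b) * b = cnj b * b / of_real (norm b)" by (simp add: sgn_div_norm scaleR_conv_of_real divide_inverse mult_ac)
    also have "\<dots> = of_real (norm b)" using False by (simp add: complex_norm_square[symmetric] power2_eq_square mult.commute)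
    finally show ?thesis .
  qed
  have "a + \<epsilon> * b = sgn a * of_real (norm a + norm b)"
  proof -
    have sa: "a = sgn a * of_real (norm a)" using False
      by (simp add: sgn_div_norm scaleR_conv_of_real)
    have "a + \<epsilon> * b = a + sgn a * (cnj (sgn b) * b)" unfolding \<epsilon>_def by (simp add: mult.assoc)
    also have "\<dots> = sgn a * of_real (norm a) + sgn a * of_real (norm b)" using cb sa by simp
    also have "\<dots> = sgn a * of_real (norm a + norm b)" by (simp add: distrib_left)
    finally show ?thesis .
  qed
  then have "norm (a + \<epsilon> * b) = norm a + norm b" using False
    by (simp only: norm_mult norm_sgn norm_of_real) simp
  then show ?thesis using H[OF n] by simp
qed

lemma part1:
  assumes l0: "0 \<le> lam" and lg: "lam < \<gamma>" and gd: "\<gamma> \<le> \<delta>"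
    and R: "RH0 \<gamma> \<delta> lam s t" and m: "m \<ge> 2"
  shows "norm (tcoeff s m) + norm (tcoeff t m) \<le>
    4 * (\<gamma> - lam) / (real m ^ 2 * (2 * \<gamma> + (\<delta> - \<gamma>) * (real m - 1)))"
proof -
  from R have hs: "s holomorphic_on ball 0 1" and ht: "t holomorphic_on ball 0 1"
    and ds: "deriv s 0 = 1" and dt: "deriv t 0 = 0"
    and pos: "\<And>z. z \<in> ball 0 1 \<Longrightarrow> Re (Lop \<gamma> \<delta> s z - of_real lam) > norm (Lop \<gamma> \<delta> t z)"
    unfolding RH0_def H0_def by auto
  define k where "k = m - 1"
  have k1: "k \<ge> 1" and mk: "m = Suc k" unfolding k_def using m by auto
  define P where "P = real (Suc k) ^ 2 * (2 * \<gamma> + (\<delta> - \<gamma>) * (real (Suc k) - 1)) / 2"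
  have Ppos: "P > 0" unfolding P_def using l0 lg gd by (intro divide_pos_pos mult_pos_pos add_pos_nonneg) auto
  have o: "open (ball (0::complex) 1)" and z: "(0::complex) \<in> ball 0 1" by auto
  have LS: "Lop \<gamma> \<delta> s holomorphic_on ball 0 1" by (rule Lop_holo[OF hs])
  have LT: "Lop \<gamma> \<delta> t holomorphic_on ball 0 1" by (rule Lop_holo[OF ht])
  have key: "norm (tcoeff s m + \<epsilon> * tcoeff t m) \<le> 2 * (\<gamma> - lam) / P" if e: "norm \<epsilon> \<le> 1" for \<epsilon>
  proof -
    define g where "g = (\<lambda>z. (Lop \<gamma> \<delta> s z - of_real lam) + \<epsilon> * Lop \<gamma> \<delta> t z)"
    have G1: "(\<lambda>z. Lop \<gamma> \<delta> s z - of_real lam) holomorphic_on ball 0 1"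
      by (intro holomorphic_intros LS)
    have G2: "(\<lambda>z. \<epsilon> * Lop \<gamma> \<delta> t z) holomorphic_on ball 0 1"
      by (intro holomorphic_intros LT)
    have hg: "g holomorphic_on ball 0 1" unfolding g_def by (rule holomorphic_on_add[OF G1 G2])
    have pg: "Re (g z) > 0" if zz: "z \<in> ball 0 1" for z
    proof -
      have "Re (\<epsilon> * Lop \<gamma> \<delta> t z) \<ge> - norm (\<epsilon> * Lop \<gamma> \<delta> t z)"
        using abs_Re_le_cmod[of "\<epsilon> * Lop \<gamma> \<delta> t z"] by linarith
      moreover have "norm (\<epsilon> * Lop \<gamma> \<delta> t z) \<le> norm (Lop \<gamma> \<delta> t z)"
        using e by (simp add: norm_mult mult_left_le_one_le)
      ultimately show ?thesis using pos[OF zz] unfolding g_def by simp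
    qed
    have g0: "g 0 = of_real (\<gamma> - lam)" unfolding g_def Lop_def using ds dt by simp
    have dg: "(deriv ^^ k) g 0 = (deriv ^^ k) (Lop \<gamma> \<delta> s) 0 + \<epsilon> * (deriv ^^ k) (Lop \<gamma> \<delta> t) 0"
    proof -
      have "(deriv ^^ k) g 0 = (deriv ^^ k) (\<lambda>z. Lop \<gamma> \<delta> s z - of_real lam) 0 + (deriv ^^ k) (\<lambda>z. \<epsilon> * Lop \<gamma> \<delta> t z) 0"
        unfolding g_def by (rule higher_deriv_add[OF G1 G2 o z])
      also have "(deriv ^^ k) (\<lambda>z. Lop \<gamma> \<delta> s z - of_real lam) 0 = (deriv ^^ k) (Lop \<gamma> \<delta> s) 0"
        using higher_deriv_diff[OF LS holomorphic_on_const o z, of k "of_real lam"] k1 by simp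
      also have "(deriv ^^ k) (\<lambda>z. \<epsilon> * Lop \<gamma> \<delta> t z) 0 = \<epsilon> * (deriv ^^ k) (Lop \<gamma> \<delta> t) 0"
        by (rule higher_deriv_cmult[OF LT z o])
      finally show ?thesis .
    qed
    have cs: "(deriv ^^ k) (Lop \<gamma> \<delta> s) 0 / fact k = of_real P * tcoeff s m"
      unfolding P_def mk by (rule Lop_coeff[OF hs])
    have ct: "(deriv ^^ k) (Lop \<gamma> \<delta> t) 0 / fact k = of_real P * tcoeff t m"
      unfolding P_def mk by (rule Lop_coeff[OF ht])
    have "(deriv ^^ k) g 0 / fact k = (deriv ^^ k) (Lop \<gamma> \<delta> s) 0 / fact k + \<epsilon> * ((deriv ^^ k) (Lop \<gamma> \<delta> t) 0 / fact k)"
      unfolding dg by (simp add: add_divide_distrib)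
    also have "\<dots> = of_real P * (tcoeff s m + \<epsilon> * tcoeff t m)"
      unfolding cs ct by (simp add: algebra_simps)
    finally have "(deriv ^^ k) g 0 / fact k = of_real P * (tcoeff s m + \<epsilon> * tcoeff t m)" .
    then have "norm (of_real P * (tcoeff s m + \<epsilon> * tcoeff t m)) \<le> 2 * (\<gamma> - lam)"
      using carath[OF hg pg k1] g0 by simp
    then have "P * norm (tcoeff s m + \<epsilon> * tcoeff t m) \<le> 2 * (\<gamma> - lam)"
      using Ppos by (simp add: norm_mult)
    then show ?thesis using Ppos by (simp add: field_simps)
  qed
  have "norm (tcoeff s m) + norm (tcoeff t m) \<le> 2 * (\<gamma> - lam) / P"
    by (rule choose_eps[OF key])
  also have "2 * (\<gamma> - lam) / P = 4 * (\<gamma> - lam) / (real m ^ 2 * (2 * \<gamma> + (\<delta> - \<gamma>) * (real m - 1)))"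
    unfolding P_def mk by (simp add: field_simps)
  finally show ?thesis .
qed

lemma re_inv_gt:
  fixes z :: complex
  assumes "norm z < 1"
  shows "Re (1 / (1 - z)) > 1 / 2"
proof -
  define a where "a = Re z"
  define b where "b = Im z"
  have "norm z ^ 2 < 1" using assms by (simp add: power_less_one_iff)
  then have nz: "a ^ 2 + b ^ 2 < 1" unfolding a_def b_def by (simp add: cmod_power2)
  have D: "(norm (1 - z))^2 = (1 - a) ^ 2 + b ^ 2" unfolding a_def b_def by (simp add: cmod_power2)
  have "a ^ 2 < 1" using nz zero_le_power2[of b] by linarith
  then have a1: "a < 1" by (simp add: abs_square_less_1)
  have Dpos: "(1 - a) ^ 2 + b ^ 2 > 0" using a1 by (simp add: add_pos_nonneg)
  have "Re (1 / (1 - z)) = (1 - a) / ((1 - a) ^ 2 + b ^ 2)"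
    unfolding Re_divide D by (simp add: a_def b_def)
  moreover have "(1 - a) / ((1 - a) ^ 2 + b ^ 2) > 1 / 2"
    using Dpos nz by (simp add: field_simps power2_eq_square)
  ultimately show ?thesis by simp
qed

lemma part2:
  assumes l0: "0 \<le> lam" and lg: "lam < \<gamma>" and gd: "\<gamma> \<le> \<delta>"
    and Bd: "B = (\<lambda>m::nat. 4 * (\<gamma> - lam) / (real m ^ 2 * (2 * \<gamma> + (\<delta> - \<gamma>) * (real m - 1))))"
    and s0d: "s0 = (\<lambda>z. z + (\<Sum>k. of_real (B (k + 2)) * z ^ (k + 2)))"
  shows "RH0 \<gamma> \<delta> lam s0 (\<lambda>z. 0) \<and> (\<forall>m\<ge>2. tcoeff s0 m = of_real (B m))"
proof -
  have g0: "\<gamma> > 0" using l0 lg by simp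
  have den: "real m ^ 2 * (2 * \<gamma> + (\<delta> - \<gamma>) * (real m - 1)) \<ge> 2 * \<gamma>" if "m \<ge> 1" for m
  proof -
    have "real m ^ 2 \<ge> 1" using that by simp
    moreover have "2 * \<gamma> + (\<delta> - \<gamma>) * (real m - 1) \<ge> 2 * \<gamma>" using that gd by simp
    ultimately have "real m ^ 2 * (2 * \<gamma> + (\<delta> - \<gamma>) * (real m - 1)) \<ge> 1 * (2 * \<gamma> + (\<delta> - \<gamma>) * (real m - 1))"
      using g0 by (intro mult_right_mono) auto
    then show ?thesis using \<open>2 * \<gamma> + (\<delta> - \<gamma>) * (real m - 1) \<ge> 2 * \<gamma>\<close> by (simp only: mult_1_left)
  qed
  have Bnn: "B m \<ge> 0" if "m \<ge> 1" for m
    using den[OF that] g0 lg unfolding Bd by (intro divide_nonneg_pos) auto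
  have Ble: "B m \<le> 2 * (\<gamma> - lam) / \<gamma>" if "m \<ge> 1" for m
  proof -
    have "B m \<le> 4 * (\<gamma> - lam) / (2 * \<gamma>)"
      unfolding Bd using den[OF that] g0 lg by (intro divide_left_mono) auto
    moreover have "4 * (\<gamma> - lam) / (2 * \<gamma>) = 2 * (\<gamma> - lam) / \<gamma>" using g0 by (simp add: field_simps)
    ultimately show ?thesis by linarith
  qed
  define c :: "nat \<Rightarrow> complex" where "c n = (if n = 0 then 0 else if n = 1 then 1 else of_real (B n))" for n
  define K where "K = 1 + 2 * (\<gamma> - lam) / \<gamma>"
  have cK: "norm (c n) \<le> K" for n
  proof -
    have "0 \<le> 2 * (\<gamma> - lam) / \<gamma>" using g0 lg by simp
    moreover have "n \<ge> 2 \<Longrightarrow> norm (c n) = B n" using Bnn[of n] unfolding c_def by simp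
    moreover note Ble[of n]
    ultimately show ?thesis unfolding c_def K_def by auto
  qed
  define F where "F = Abs_fps c"
  have Fn: "fps_nth F = c" unfolding F_def by (rule ext) simp
  have summ: "summable (\<lambda>n. c n * z ^ n)" if "norm z < 1" for z
  proof (rule summable_comparison_test')
    show "summable (\<lambda>n. K * norm z ^ n)"
      using that by (intro summable_mult summable_geometric) simp
    fix n :: nat
    show "norm (c n * z ^ n) \<le> K * norm z ^ n"
      unfolding norm_mult norm_power by (rule mult_right_mono[OF cK]) simp
  qed
  have rad: "fps_conv_radius F \<ge> 1"
    unfolding fps_conv_radius_def Fn
  proof (rule conv_radius_geI_ex)
    fix r :: real assume "0 < r" "ereal r < 1"
    then show "\<exists>z. norm z = r \<and> summable (\<lambda>n. c n * z ^ n)"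
      by (intro exI[of _ "of_real r"]) (auto intro!: summ)
  qed
  have ev: "eval_fps F z = s0 z" if z: "z \<in> ball 0 1" for z
  proof -
    have nz: "norm z < 1" using z by simp
    have "(\<lambda>n. c n * z ^ n) sums eval_fps F z"
    proof -
      have "ereal (norm z) < 1" using nz by simp
      then have "ereal (norm z) < fps_conv_radius F" using rad by (rule order_less_le_trans)
      then show ?thesis using sums_eval_fps[of z F] Fn by simp
    qed
    from sums_split_initial_segment[OF this, of 2]
    have "(\<lambda>i. c (i + 2) * z ^ (i + 2)) sums (eval_fps F z - (\<Sum>i<2. c i * z ^ i))" .
    moreover have "(\<Sum>i<2. c i * z ^ i) = z" by (simp add: c_def numeral_2_eq_2)
    moreover have "(\<lambda>i. c (i + 2) * z ^ (i + 2)) = (\<lambda>k. of_real (B (k + 2)) * z ^ (k + 2))"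
      by (simp add: c_def)
    ultimately have "(\<lambda>k. of_real (B (k + 2)) * z ^ (k + 2)) sums (eval_fps F z - z)" by simp
    then show ?thesis unfolding s0d by (simp add: sums_iff)
  qed
  have radpos: "fps_conv_radius F > 0" by (rule order_less_le_trans[OF _ rad]) simp
  have ballsub: "ball 0 1 \<subseteq> eball (0::complex) (fps_conv_radius F)"
  proof
    fix z :: complex assume "z \<in> ball 0 1"
    then have "ereal (norm z) < 1" by simp
    then have "ereal (norm z) < fps_conv_radius F" using rad by (rule order_less_le_trans)
    then show "z \<in> eball 0 (fps_conv_radius F)" by simp
  qed
  have hs: "s0 holomorphic_on ball 0 1"
    by (rule holomorphic_transform[OF holomorphic_on_eval_fps[OF ballsub] ev])
  have exp: "s0 has_fps_expansion F"
    unfolding has_fps_expansion_def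
  proof (intro conjI radpos)
    have "\<forall>\<^sub>F z in nhds 0. z \<in> ball (0::complex) 1"
      by (rule eventually_nhds_in_open) auto
    then show "\<forall>\<^sub>F z in nhds 0. eval_fps F z = s0 z"
      by (rule eventually_mono) (rule ev)
  qed
  have tc: "tcoeff s0 n = c n" for n
    using fps_nth_fps_expansion[OF exp, of n] unfolding tcoeff_def Fn by (simp only: of_nat_fact)
  have s00: "s0 0 = 0" unfolding s0d by simp
  have ds0: "deriv s0 0 = 1" using tc[of 1] unfolding tcoeff_def c_def by simp
  have Lc: "(deriv ^^ n) (Lop \<gamma> \<delta> s0) 0 / fact n = (if n = 0 then of_real \<gamma> else of_real (2 * (\<gamma> - lam)))" for n
  proof -
    have "(deriv ^^ n) (Lop \<gamma> \<delta> s0) 0 / fact n =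
       of_real (real (Suc n) ^ 2 * (2 * \<gamma> + (\<delta> - \<gamma>) * (real (Suc n) - 1)) / 2) * c (Suc n)"
      unfolding tc[symmetric] by (rule Lop_coeff[OF hs])
    also have "\<dots> = (if n = 0 then of_real \<gamma> else of_real (2 * (\<gamma> - lam)))"
    proof (cases "n = 0")
      case True then show ?thesis by (simp add: c_def)
    next
      case False
      have dpos: "real (Suc n) ^ 2 * (2 * \<gamma> + (\<delta> - \<gamma>) * (real (Suc n) - 1)) > 0"
        using den[of "Suc n"] g0 by simp
      have "real (Suc n) ^ 2 * (2 * \<gamma> + (\<delta> - \<gamma>) * (real (Suc n) - 1)) / 2 * B (Suc n) = 2 * (\<gamma> - lam)"
      proof -
        have gen: "\<And>D a::real. D \<noteq> 0 \<Longrightarrow> D / 2 * (4 * a / D) = 2 * a" by (simp add: field_simps)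
        show ?thesis by (simp only: Bd) (rule gen, use dpos in linarith)
      qed
      then have "of_real (real (Suc n) ^ 2 * (2 * \<gamma> + (\<delta> - \<gamma>) * (real (Suc n) - 1)) / 2) * of_real (B (Suc n))
         = (of_real (2 * (\<gamma> - lam)) :: complex)"
        by (metis of_real_mult)
      then show ?thesis using False unfolding c_def by simp
    qed
    finally show ?thesis .
  qed
  have LS: "Lop \<gamma> \<delta> s0 z = of_real (2 * (\<gamma> - lam)) * (1 / (1 - z)) + of_real (\<gamma> - 2 * (\<gamma> - lam))"
    if z: "z \<in> ball 0 1" for z
  proof -
    have "(\<lambda>n. (deriv ^^ n) (Lop \<gamma> \<delta> s0) 0 / fact n * (z - 0) ^ n) sums Lop \<gamma> \<delta> s0 z"
      by (rule holomorphic_power_series[OF Lop_holo[OF hs] z])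
    then have A: "(\<lambda>n. (if n = 0 then of_real \<gamma> else of_real (2 * (\<gamma> - lam))) * z ^ n) sums Lop \<gamma> \<delta> s0 z"
      by (simp only: Lc diff_zero)
    have nz: "norm z < 1" using z by simp
    have B1: "(\<lambda>n. of_real (2 * (\<gamma> - lam)) * z ^ n) sums (of_real (2 * (\<gamma> - lam)) * (1 / (1 - z)))"
      by (rule sums_mult[OF geometric_sums[OF nz]])
    have B2: "(\<lambda>n. if n = 0 then of_real (\<gamma> - 2 * (\<gamma> - lam)) else 0) sums (of_real (\<gamma> - 2 * (\<gamma> - lam)) :: complex)"
      using sums_single[of 0 "\<lambda>_. of_real (\<gamma> - 2 * (\<gamma> - lam)) :: complex"] by simp
    have C: "(\<lambda>n. of_real (2 * (\<gamma> - lam)) * z ^ n + (if n = 0 then of_real (\<gamma> - 2 * (\<gamma> - lam)) else 0))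
        sums (of_real (2 * (\<gamma> - lam)) * (1 / (1 - z)) + of_real (\<gamma> - 2 * (\<gamma> - lam)))"
      by (rule sums_add[OF B1 B2])
    have E: "(\<lambda>n. of_real (2 * (\<gamma> - lam)) * z ^ n + (if n = 0 then of_real (\<gamma> - 2 * (\<gamma> - lam)) else 0))
        = (\<lambda>n. (if n = 0 then of_real \<gamma> else of_real (2 * (\<gamma> - lam))) * z ^ n)"
    proof (rule ext)
      fix n :: nat
      show "of_real (2 * (\<gamma> - lam)) * z ^ n + (if n = 0 then of_real (\<gamma> - 2 * (\<gamma> - lam)) else 0)
        = (if n = 0 then of_real \<gamma> else of_real (2 * (\<gamma> - lam))) * z ^ n"
        by (cases "n = 0") (simp_all only: if_True if_False power_0 mult_1_right add_0_right of_real_diff, simp_all)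
    qed
    from C have "(\<lambda>n. (if n = 0 then of_real \<gamma> else of_real (2 * (\<gamma> - lam))) * z ^ n)
        sums (of_real (2 * (\<gamma> - lam)) * (1 / (1 - z)) + of_real (\<gamma> - 2 * (\<gamma> - lam)))" unfolding E .
    from sums_unique2[OF A this] show ?thesis .
  qed
  have pos: "Re (Lop \<gamma> \<delta> s0 z - of_real lam) > norm (Lop \<gamma> \<delta> (\<lambda>z. 0) z)" if z: "z \<in> ball 0 1" for z
  proof -
    have L0: "Lop \<gamma> \<delta> (\<lambda>z. 0) z = 0" unfolding Lop_def by simp
    have "Re (1 / (1 - z)) > 1 / 2" using re_inv_gt[of z] z by simp
    then have h: "1 < 2 * Re (1 / (1 - z))" by simp
    have "(\<gamma> - lam) * 1 < (\<gamma> - lam) * (2 * Re (1 / (1 - z)))"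
      by (rule mult_strict_left_mono[OF h]) (use lg in simp)
    moreover have "(\<gamma> - lam) * (2 * Re (1 / (1 - z))) = 2 * (\<gamma> - lam) * Re (1 / (1 - z))" by (simp only: mult_ac)
    ultimately have "2 * (\<gamma> - lam) * Re (1 / (1 - z)) > (\<gamma> - lam)" by simp
    moreover have "Re (Lop \<gamma> \<delta> s0 z - of_real lam) = 2 * (\<gamma> - lam) * Re (1 / (1 - z)) + (\<gamma> - 2 * (\<gamma> - lam)) - lam"
    proof -
      have rm: "Re (of_real a * w) = a * Re w" for a w by simp
      show ?thesis unfolding LS[OF z] minus_complex.sel plus_complex.sel rm Re_complex_of_real by simp
    qed
    ultimately show ?thesis unfolding L0 by simp
  qed
  have "RH0 \<gamma> \<delta> lam s0 (\<lambda>z. 0)"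
    unfolding RH0_def H0_def using hs s00 ds0 pos by auto
  moreover have "\<forall>m\<ge>2. tcoeff s0 m = of_real (B m)" using tc unfolding c_def by simp
  ultimately show ?thesis by simp
qed

theorem theorem7:
  fixes \<gamma> \<delta> lam :: real and s t :: "complex \<Rightarrow> complex"
  defines "B \<equiv> (\<lambda>m::nat. 4 * (\<gamma> - lam) / (real m ^ 2 * (2 * \<gamma> + (\<delta> - \<gamma>) * (real m - 1))))"
  assumes "0 \<le> lam" and "lam < \<gamma>" and "\<gamma> \<le> \<delta>"
  shows "(RH0 \<gamma> \<delta> lam s t \<longrightarrow>
           (\<forall>m\<ge>2. norm (tcoeff s m) + norm (tcoeff t m) \<le> B m
                  \<and> \<bar>norm (tcoeff s m) - norm (tcoeff t m)\<bar> \<le> B m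
                  \<and> norm (tcoeff s m) \<le> B m))
       \<and> (let s0 = (\<lambda>z. z + (\<Sum>k. of_real (B (k + 2)) * z ^ (k + 2))); t0 = (\<lambda>z. 0)
          in RH0 \<gamma> \<delta> lam s0 t0 \<and>
             (\<forall>m\<ge>2. norm (tcoeff s0 m) + norm (tcoeff t0 m) = B m
                  \<and> \<bar>norm (tcoeff s0 m) - norm (tcoeff t0 m)\<bar> = B m
                  \<and> norm (tcoeff s0 m) = B m))"
proof -
  have Bd: "B = (\<lambda>m::nat. 4 * (\<gamma> - lam) / (real m ^ 2 * (2 * \<gamma> + (\<delta> - \<gamma>) * (real m - 1))))"
    unfolding B_def by (rule refl)
  have Bnn: "B m \<ge> 0" if "m \<ge> 2" for m
  proof -
    have "real m ^ 2 > 0" using that by simp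
    moreover have "2 * \<gamma> + (\<delta> - \<gamma>) * (real m - 1) > 0"
      using assms(2,3,4) that by (intro add_pos_nonneg mult_nonneg_nonneg) auto
    ultimately show ?thesis unfolding Bd using assms(2,3) by (intro divide_nonneg_pos mult_pos_pos) auto
  qed
  have P1: "RH0 \<gamma> \<delta> lam s t \<longrightarrow>
           (\<forall>m\<ge>2. norm (tcoeff s m) + norm (tcoeff t m) \<le> B m
                  \<and> \<bar>norm (tcoeff s m) - norm (tcoeff t m)\<bar> \<le> B m
                  \<and> norm (tcoeff s m) \<le> B m)"
  proof (intro impI allI)
    fix m :: nat assume R: "RH0 \<gamma> \<delta> lam s t" and m: "m \<ge> 2"
    have "norm (tcoeff s m) + norm (tcoeff t m) \<le> B m"
      unfolding Bd using part1[OF assms(2,3,4) R m] by simp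
    moreover have "\<bar>norm (tcoeff s m) - norm (tcoeff t m)\<bar> \<le> norm (tcoeff s m) + norm (tcoeff t m)" using norm_ge_zero[of "tcoeff s m"] norm_ge_zero[of "tcoeff t m"] by linarith
    moreover have "norm (tcoeff s m) \<le> norm (tcoeff s m) + norm (tcoeff t m)" using norm_ge_zero[of "tcoeff s m"] norm_ge_zero[of "tcoeff t m"] by linarith
    ultimately show "norm (tcoeff s m) + norm (tcoeff t m) \<le> B m
                  \<and> \<bar>norm (tcoeff s m) - norm (tcoeff t m)\<bar> \<le> B m
                  \<and> norm (tcoeff s m) \<le> B m" by linarith
  qed
  define s0 :: "complex \<Rightarrow> complex" where "s0 = (\<lambda>z. z + (\<Sum>k. of_real (B (k + 2)) * z ^ (k + 2)))"
  have P2: "RH0 \<gamma> \<delta> lam s0 (\<lambda>z. 0) \<and> (\<forall>m\<ge>2. tcoeff s0 m = of_real (B m))"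
    by (rule part2[OF assms(2,3,4) Bd s0_def])
  have t0: "tcoeff (\<lambda>z. 0) m = 0" for m unfolding tcoeff_def by simp
  have "RH0 \<gamma> \<delta> lam s0 (\<lambda>z. 0) \<and>
             (\<forall>m\<ge>2. norm (tcoeff s0 m) + norm (tcoeff (\<lambda>z. 0) m) = B m
                  \<and> \<bar>norm (tcoeff s0 m) - norm (tcoeff (\<lambda>z. 0) m)\<bar> = B m
                  \<and> norm (tcoeff s0 m) = B m)"
    using P2 Bnn by (simp add: t0)
  then have P3: "let s0 = (\<lambda>z. z + (\<Sum>k. of_real (B (k + 2)) * z ^ (k + 2))); t0 = (\<lambda>z. 0)
          in RH0 \<gamma> \<delta> lam s0 t0 \<and>
             (\<forall>m\<ge>2. norm (tcoeff s0 m) + norm (tcoeff t0 m) = B m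
                  \<and> \<bar>norm (tcoeff s0 m) - norm (tcoeff t0 m)\<bar> = B m
                  \<and> norm (tcoeff s0 m) = B m)"
    unfolding Let_def s0_def .
  show ?thesis using P1 P3 by (rule conjI)
qed

end
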